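(* Let $E$ and $F$ be Banach lattices such that $E$ is positively isomorphic to a subspace of $F$, i.e. there is a positive linear operator $T\colon E\to F$ that is a topological isomorphism onto its range. If $F$ has the positive Schur property, then $E$ has the positive Schur property.
   Context: A Banach lattice $E$ has the positive Schur property (PSP) if every weakly null sequence of positive elements of $E$ (i.e. elements of $E^+=\{x\in E: x\ge 0\}$) is norm null. A linear operator between Banach lattices is positive if it maps positive elements to positive elements. *)

theory Defs
  imports "HOL-Analysis.Analysis"
begin

definition lmod :: "'a::{lattice, uminus} \<Rightarrow> 'a" where
  "lmod x = sup x (- x)"

definition banach_lattice :: "'a::{banach, ordered_real_vector, lattice} itself \<Rightarrow> bool" where
  "banach_lattice TYPE('a) \<longleftrightarrow> (\<forall>x y :: 'a. lmod x \<le> lmod y \<longrightarrow> norm x \<le> norm y)"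

definition weakly_null :: "(nat \<Rightarrow> 'a::real_normed_vector) \<Rightarrow> bool" where
  "weakly_null x \<longleftrightarrow> (\<forall>f :: 'a \<Rightarrow> real. bounded_linear f \<longrightarrow> (\<lambda>n. f (x n)) \<longlonglongrightarrow> 0)"

definition positive_schur :: "'a::{banach, ordered_real_vector, lattice} itself \<Rightarrow> bool" where
  "positive_schur TYPE('a) \<longleftrightarrow>
     (\<forall>x :: nat \<Rightarrow> 'a. (\<forall>n. 0 \<le> x n) \<and> weakly_null x \<longrightarrow> (\<lambda>n. norm (x n)) \<longlonglongrightarrow> 0)"

definition positive_op :: "('a::ordered_ab_group_add \<Rightarrow> 'b::ordered_ab_group_add) \<Rightarrow> bool" where
  "positive_op T \<longleftrightarrow> (\<forall>x. 0 \<le> x \<longrightarrow> 0 \<le> T x)"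

end

theory Submission
  imports Defs
begin

theorem lemma1p2:
  fixes T :: "'a::{banach, ordered_real_vector, lattice} \<Rightarrow> 'b::{banach, ordered_real_vector, lattice}"
  assumes "banach_lattice TYPE('a)" and "banach_lattice TYPE('b)"
    and "linear T" and "positive_op T"
    and "bounded_linear T" and "\<exists>c>0. \<forall>x. c * norm x \<le> norm (T x)"
    and "positive_schur TYPE('b)"
  shows "positive_schur TYPE('a)"
  unfolding positive_schur_def
proof (intro allI impI)
  fix x :: "nat \<Rightarrow> 'a"
  assume h: "(\<forall>n. 0 \<le> x n) \<and> weakly_null x"
  obtain c where c: "c > 0" "\<forall>x. c * norm x \<le> norm (T x)" using assms(6) by blast
  have pos: "\<forall>n. 0 \<le> T (x n)" using h assms(4) unfolding positive_op_def by blast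
  have wn: "weakly_null (\<lambda>n. T (x n))"
    unfolding weakly_null_def
  proof (intro allI impI)
    fix f :: "'b \<Rightarrow> real" assume "bounded_linear f"
    then have "bounded_linear (\<lambda>y. f (T y))" using bounded_linear_compose[OF _ assms(5)] by blast
    moreover have "weakly_null x" using h by simp
    ultimately show "(\<lambda>n. f (T (x n))) \<longlonglongrightarrow> 0" unfolding weakly_null_def by blast
  qed
  have t: "(\<lambda>n. norm (T (x n))) \<longlonglongrightarrow> 0"
    using assms(7) pos wn unfolding positive_schur_def by simp
  then have t2: "(\<lambda>n. norm (T (x n)) / c) \<longlonglongrightarrow> 0"
    using tendsto_divide_zero by blast
  show "(\<lambda>n. norm (x n)) \<longlonglongrightarrow> 0"
  proof (rule real_tendsto_sandwich[OF _ _ tendsto_const t2])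
    show "\<forall>\<^sub>F n in sequentially. 0 \<le> norm (x n)" by simp
    show "\<forall>\<^sub>F n in sequentially. norm (x n) \<le> norm (T (x n)) / c"
    proof (rule always_eventually, rule allI)
      fix n
      have "c * norm (x n) \<le> norm (T (x n))" using c(2) by blast
      then show "norm (x n) \<le> norm (T (x n)) / c" using c(1) by (simp add: pos_le_divide_eq mult.commute)
    qed
  qed
qed

end
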